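(* Let $\mathbf G_*=(\partial:G_1\to G_0)$ be a crossed module and let $\mathbf Z_*(\mathbf G_* )$ be the crossed module $\delta:G_1\to\mathbf Z_0(\mathbf G_* )$. Then: (i) for $(x,\xi)\in\mathbf Z_0(\mathbf G_* )$ and $y\in G_0$, $\xi(y)$ is a morphism $yx\to xy$ in $\mathsf{Cat}(\mathbf G_* )$; (ii) the family $\bar\xi=(\xi(y))_{y}$ is a natural isomorphism $(-)\cdot x\Rightarrow x\cdot(-)$; (iii) $(x,\bar\xi)$ is an object of the centre $\mathcal Z(\mathsf{Cat}(\mathbf G_* ))$; (iv) the map $(x,\xi)\mapsto (x,\bar\xi)$ is a bijection from $\mathbf Z_0(\mathbf G_* )$ onto the objects of $\mathcal Z(\mathsf{Cat}(\mathbf G_* ))$; (v) for $(x,\xi),(y,\eta)\in\mathbf Z_0(\mathbf G_* )$ and $a\in G_1$ with $y=\partial(a)x$, the morphism $a:x\to y$ of $\mathsf{Cat}(\mathbf G_* )$ is a morphism $(x,\bar\xi)\to(y,\bar\eta)$ in $\mathcal Z(\mathsf{Cat}(\mathbf G_* ))$ if and only if $(y,\eta)=\delta(a)\cdot(x,\xi)$; consequently the bijection of (iv), together with the identity on morphisms $a\mapsto a$, is an isomorphism of monoidal categories $\mathsf{Cat}(\mathbf Z_*(\mathbf G_* ))\to\mathcal Z(\mathsf{Cat}(\mathbf G_* ))$.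
   Context: A crossed module consists of groups $H_1,H_0$, a homomorphism $\partial:H_1\to H_0$ and a left action $(x,a)\mapsto{}^x a$ of $H_0$ on $H_1$ by automorphisms with $\partial({}^x a)=x\partial(a)x^{-1}$ and ${}^{\partial(b)}a=bab^{-1}$. For a crossed module $\mathbf H_*$, the strict monoidal groupoid $\mathsf{Cat}(\mathbf H_* )$ has objects the elements of $H_0$; a morphism $x\to y$ is an element $a\in H_1$ with $y=\partial(a)x$; composition of $a:x\to\partial(a)x$ and $b:\partial(a)x\to\partial(b)\partial(a)x$ is $ba$; the tensor product is $x\cdot y=xy$ on objects and $(a:x\to x')\cdot(b:y\to y')=(a\,{}^x b: xy\to x'y')$ on morphisms. For a monoidal category $(\mathcal C,\otimes)$ its centre $\mathcal Z(\mathcal C)$ has objects pairs $(x,\xi)$ with $\xi:(-)\otimes x\Rightarrow x\otimes(-)$ a natural isomorphism with components $\xi_y:y\otimes x\to x\otimes y$ such that $\xi_{y\otimes z}=(\xi_y\otimes 1_z)\circ(1_y\otimes\xi_z)$; morphisms $(x,\xi)\to(y,\eta)$ are $f:x\to y$ with $(f\otimes 1_z)\circ\xi_z=\eta_z\circ(1_z\otimes f)$ for all $z$; tensor $(x,\xi)\otimes(y,\eta)=(x\otimes y,\zeta)$ with $\zeta_z=(1_x\otimes\eta_z)\circ(\xi_z\otimes 1_y)$. Commutators $[x,t]=xtx^{-1}t^{-1}$. $\mathbf Z_0(\mathbf G_* )$ is the set of pairs $(x,\xi)$, $x\in G_0$, $\xi:G_0\to G_1$ with (Z1) $\partial\xi(t)=[x,t]$,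 (Z2) $\xi(\partial a)={}^xa\,a^{-1}$, (Z3) $\xi(st)=\xi(s)\,{}^s\xi(t)$; it is a group under $(x,\xi)(y,\eta)=(xy,t\mapsto{}^x\eta(t)\xi(t))$. $\delta:G_1\to\mathbf Z_0(\mathbf G_* )$ is $\delta(c)=(\partial c, t\mapsto c({}^tc)^{-1})$, and $\mathbf Z_0(\mathbf G_* )$ acts on $G_1$ by ${}^{(x,\xi)}a={}^xa$; this is a crossed module $\mathbf Z_*(\mathbf G_* )$. *)

theory Defs
  imports "HOL-Algebra.Group" "HOL-Library.FuncSet"
begin

definition crossed_module ::
  "('a,'c) monoid_scheme \<Rightarrow> ('b,'e) monoid_scheme \<Rightarrow> ('a \<Rightarrow> 'b) \<Rightarrow> ('b \<Rightarrow> 'a \<Rightarrow> 'a) \<Rightarrow> bool" where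
  "crossed_module H1 H0 d act \<longleftrightarrow>
     group H1 \<and> group H0 \<and> d \<in> hom H1 H0 \<and>
     (\<forall>x\<in>carrier H0. \<forall>a\<in>carrier H1. act x a \<in> carrier H1) \<and>
     (\<forall>x\<in>carrier H0. \<forall>a\<in>carrier H1. \<forall>b\<in>carrier H1.
        act x (a \<otimes>\<^bsub>H1\<^esub> b) = act x a \<otimes>\<^bsub>H1\<^esub> act x b) \<and>
     (\<forall>a\<in>carrier H1. act \<one>\<^bsub>H0\<^esub> a = a) \<and>
     (\<forall>x\<in>carrier H0. \<forall>y\<in>carrier H0. \<forall>a\<in>carrier H1.
        act (x \<otimes>\<^bsub>H0\<^esub> y) a = act x (act y a)) \<and>
     (\<forall>x\<in>carrier H0. \<forall>a\<in>carrier H1.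
        d (act x a) = x \<otimes>\<^bsub>H0\<^esub> d a \<otimes>\<^bsub>H0\<^esub> inv\<^bsub>H0\<^esub> x) \<and>
     (\<forall>a\<in>carrier H1. \<forall>b\<in>carrier H1.
        act (d b) a = b \<otimes>\<^bsub>H1\<^esub> a \<otimes>\<^bsub>H1\<^esub> inv\<^bsub>H1\<^esub> b)"

text \<open>Objects of type 'o, morphisms of type 'm.  hom x y is the set of morphisms x \<rightarrow> y,
  cmp g f is the composite g \<circ> f, idm x the identity, tob / tmor the tensor product on
  objects / morphisms, unt the unit object.\<close>

record ('o,'m) smcat =
  ob   :: "'o set"
  hom  :: "'o \<Rightarrow> 'o \<Rightarrow> 'm set"
  cmp  :: "'m \<Rightarrow> 'm \<Rightarrow> 'm"
  idm  :: "'o \<Rightarrow> 'm"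
  tob  :: "'o \<Rightarrow> 'o \<Rightarrow> 'o"
  tmor :: "'m \<Rightarrow> 'm \<Rightarrow> 'm"
  unt  :: "'o"

definition is_iso :: "('o,'m,'z) smcat_scheme \<Rightarrow> 'm \<Rightarrow> 'o \<Rightarrow> 'o \<Rightarrow> bool" where
  "is_iso C f x y \<longleftrightarrow> f \<in> hom C x y \<and>
     (\<exists>g\<in>hom C y x. cmp C g f = idm C x \<and> cmp C f g = idm C y)"

definition nat_iso_lr :: "('o,'m,'z) smcat_scheme \<Rightarrow> 'o \<Rightarrow> ('o \<Rightarrow> 'm) \<Rightarrow> bool" where
  "nat_iso_lr C x xi \<longleftrightarrow>
     (\<forall>y\<in>ob C. is_iso C (xi y) (tob C y x) (tob C x y)) \<and>
     (\<forall>y\<in>ob C. \<forall>y'\<in>ob C. \<forall>f\<in>hom C y y'.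
        cmp C (tmor C (idm C x) f) (xi y) = cmp C (xi y') (tmor C f (idm C x)))"

definition ctr_obj :: "('o,'m,'z) smcat_scheme \<Rightarrow> 'o \<times> ('o \<Rightarrow> 'm) \<Rightarrow> bool" where
  "ctr_obj C X \<longleftrightarrow> (case X of (x, xi) \<Rightarrow>
     x \<in> ob C \<and> xi \<in> extensional (ob C) \<and> nat_iso_lr C x xi \<and>
     (\<forall>y\<in>ob C. \<forall>z\<in>ob C.
        xi (tob C y z) = cmp C (tmor C (xi y) (idm C z)) (tmor C (idm C y) (xi z))))"

definition ctr_hom :: "('o,'m,'z) smcat_scheme \<Rightarrow> 'o \<times> ('o \<Rightarrow> 'm) \<Rightarrow> 'o \<times> ('o \<Rightarrow> 'm) \<Rightarrow> 'm set" where
  "ctr_hom C X Y = {f \<in> hom C (fst X) (fst Y).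
     \<forall>z\<in>ob C. cmp C (tmor C f (idm C z)) (snd X z) = cmp C (snd Y z) (tmor C (idm C z) f)}"

definition centre :: "('o,'m,'z) smcat_scheme \<Rightarrow> ('o \<times> ('o \<Rightarrow> 'm), 'm) smcat" where
  "centre C = \<lparr> ob = {X. ctr_obj C X},
     hom = ctr_hom C,
     cmp = cmp C,
     idm = (\<lambda>X. idm C (fst X)),
     tob = (\<lambda>X Y. (tob C (fst X) (fst Y),
              \<lambda>z\<in>ob C. cmp C (tmor C (idm C (fst X)) (snd Y z)) (tmor C (snd X z) (idm C (fst Y))))),
     tmor = tmor C,
     unt = (unt C, \<lambda>z\<in>ob C. idm C z) \<rparr>"

definition smcat_iso ::
  "('o,'m,'z) smcat_scheme \<Rightarrow> ('p,'n,'w) smcat_scheme \<Rightarrow> ('o \<Rightarrow> 'p) \<Rightarrow> ('m \<Rightarrow> 'n) \<Rightarrow> bool" where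
  "smcat_iso C D Fo Fm \<longleftrightarrow>
     bij_betw Fo (ob C) (ob D) \<and>
     (\<forall>x\<in>ob C. \<forall>y\<in>ob C. bij_betw Fm (hom C x y) (hom D (Fo x) (Fo y))) \<and>
     (\<forall>x\<in>ob C. Fm (idm C x) = idm D (Fo x)) \<and>
     (\<forall>x\<in>ob C. \<forall>y\<in>ob C. \<forall>z\<in>ob C. \<forall>f\<in>hom C x y. \<forall>g\<in>hom C y z.
        Fm (cmp C g f) = cmp D (Fm g) (Fm f)) \<and>
     (\<forall>x\<in>ob C. \<forall>y\<in>ob C. Fo (tob C x y) = tob D (Fo x) (Fo y)) \<and>
     Fo (unt C) = unt D \<and>
     (\<forall>x\<in>ob C. \<forall>x'\<in>ob C. \<forall>y\<in>ob C. \<forall>y'\<in>ob C. \<forall>f\<in>hom C x x'. \<forall>g\<in>hom C y y'.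
        Fm (tmor C f g) = tmor D (Fm f) (Fm g))"

text \<open>A morphism a : x \<rightarrow> d(a) x is represented as the triple (x, a, d(a) x).\<close>
definition CatXM ::
  "('a,'c) monoid_scheme \<Rightarrow> ('b,'e) monoid_scheme \<Rightarrow> ('a \<Rightarrow> 'b) \<Rightarrow> ('b \<Rightarrow> 'a \<Rightarrow> 'a)
   \<Rightarrow> ('b, 'b \<times> 'a \<times> 'b) smcat" where
  "CatXM H1 H0 d act = \<lparr>
     ob = carrier H0,
     hom = (\<lambda>x y. {(x, a, y) | a. x \<in> carrier H0 \<and> a \<in> carrier H1 \<and> y = d a \<otimes>\<^bsub>H0\<^esub> x}),
     cmp = (\<lambda>g f. (fst f, fst (snd g) \<otimes>\<^bsub>H1\<^esub> fst (snd f), snd (snd g))),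
     idm = (\<lambda>x. (x, \<one>\<^bsub>H1\<^esub>, x)),
     tob = (\<lambda>x y. x \<otimes>\<^bsub>H0\<^esub> y),
     tmor = (\<lambda>f g. (fst f \<otimes>\<^bsub>H0\<^esub> fst g,
                    fst (snd f) \<otimes>\<^bsub>H1\<^esub> act (fst f) (fst (snd g)),
                    snd (snd f) \<otimes>\<^bsub>H0\<^esub> snd (snd g))),
     unt = \<one>\<^bsub>H0\<^esub> \<rparr>"

definition Z0 ::
  "('a,'c) monoid_scheme \<Rightarrow> ('b,'e) monoid_scheme \<Rightarrow> ('a \<Rightarrow> 'b) \<Rightarrow> ('b \<Rightarrow> 'a \<Rightarrow> 'a)
   \<Rightarrow> ('b \<times> ('b \<Rightarrow> 'a)) set" where
  "Z0 G1 G0 d act = {(x, xi). x \<in> carrier G0 \<and> xi \<in> carrier G0 \<rightarrow>\<^sub>E carrier G1 \<and>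
     (\<forall>t\<in>carrier G0. d (xi t) = x \<otimes>\<^bsub>G0\<^esub> t \<otimes>\<^bsub>G0\<^esub> inv\<^bsub>G0\<^esub> x \<otimes>\<^bsub>G0\<^esub> inv\<^bsub>G0\<^esub> t) \<and>
     (\<forall>a\<in>carrier G1. xi (d a) = act x a \<otimes>\<^bsub>G1\<^esub> inv\<^bsub>G1\<^esub> a) \<and>
     (\<forall>s\<in>carrier G0. \<forall>t\<in>carrier G0. xi (s \<otimes>\<^bsub>G0\<^esub> t) = xi s \<otimes>\<^bsub>G1\<^esub> act s (xi t))}"

definition Z0grp ::
  "('a,'c) monoid_scheme \<Rightarrow> ('b,'e) monoid_scheme \<Rightarrow> ('a \<Rightarrow> 'b) \<Rightarrow> ('b \<Rightarrow> 'a \<Rightarrow> 'a)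
   \<Rightarrow> ('b \<times> ('b \<Rightarrow> 'a)) monoid" where
  "Z0grp G1 G0 d act = \<lparr> carrier = Z0 G1 G0 d act,
     mult = (\<lambda>X Y. (fst X \<otimes>\<^bsub>G0\<^esub> fst Y,
                   \<lambda>t\<in>carrier G0. act (fst X) (snd Y t) \<otimes>\<^bsub>G1\<^esub> snd X t)),
     one = (\<one>\<^bsub>G0\<^esub>, \<lambda>t\<in>carrier G0. \<one>\<^bsub>G1\<^esub>) \<rparr>"

definition deltaZ ::
  "('a,'c) monoid_scheme \<Rightarrow> ('b,'e) monoid_scheme \<Rightarrow> ('a \<Rightarrow> 'b) \<Rightarrow> ('b \<Rightarrow> 'a \<Rightarrow> 'a)
   \<Rightarrow> 'a \<Rightarrow> 'b \<times> ('b \<Rightarrow> 'a)" where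
  "deltaZ G1 G0 d act c = (d c, \<lambda>t\<in>carrier G0. c \<otimes>\<^bsub>G1\<^esub> inv\<^bsub>G1\<^esub> (act t c))"

definition actZ :: "('b \<Rightarrow> 'a \<Rightarrow> 'a) \<Rightarrow> 'b \<times> ('b \<Rightarrow> 'a) \<Rightarrow> 'a \<Rightarrow> 'a" where
  "actZ act X a = act (fst X) a"

definition xibar :: "('b,'e) monoid_scheme \<Rightarrow> 'b \<Rightarrow> ('b \<Rightarrow> 'a) \<Rightarrow> 'b \<Rightarrow> 'b \<times> 'a \<times> 'b" where
  "xibar G0 x xi = (\<lambda>y\<in>carrier G0. (y \<otimes>\<^bsub>G0\<^esub> x, xi y, x \<otimes>\<^bsub>G0\<^esub> y))"

definition ZtoC :: "('b,'e) monoid_scheme \<Rightarrow> 'b \<times> ('b \<Rightarrow> 'a) \<Rightarrow> 'b \<times> ('b \<Rightarrow> 'b \<times> 'a \<times> 'b)" where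
  "ZtoC G0 X = (fst X, xibar G0 (fst X) (snd X))"

end

theory Submission
  imports Defs
begin

locale xm =
  fixes G1 :: "('a,'c) monoid_scheme" and G0 :: "('b,'e) monoid_scheme"
    and d :: "'a \<Rightarrow> 'b" and act :: "'b \<Rightarrow> 'a \<Rightarrow> 'a"
  assumes cm: "crossed_module G1 G0 d act"
begin

lemma grp1: "group G1" using cm unfolding crossed_module_def by blast
lemma grp0: "group G0" using cm unfolding crossed_module_def by blast

sublocale g1: group G1 by (rule grp1)
sublocale g0: group G0 by (rule grp0)

lemma d_hom: "d \<in> Group.hom G1 G0" using cm unfolding crossed_module_def by blast
lemma d_closed[simp]: "a \<in> carrier G1 \<Longrightarrow> d a \<in> carrier G0" using d_hom by (auto simp: Group.hom_def)
lemma d_mult[simp]: "a \<in> carrier G1 \<Longrightarrow> b \<in> carrier G1 \<Longrightarrow> d (a \<otimes>\<^bsub>G1\<^esub> b) = d a \<otimes>\<^bsub>G0\<^esub> d b"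
  using d_hom by (auto simp: Group.hom_def)
lemma d_inv[simp]: "a \<in> carrier G1 \<Longrightarrow> d (inv\<^bsub>G1\<^esub> a) = inv\<^bsub>G0\<^esub> d a"
proof -
  have "group_hom G1 G0 d" unfolding group_hom_def group_hom_axioms_def using grp1 grp0 d_hom by blast
  thus "a \<in> carrier G1 \<Longrightarrow> ?thesis" by (rule group_hom.hom_inv)
qed
lemma d_one[simp]: "d \<one>\<^bsub>G1\<^esub> = \<one>\<^bsub>G0\<^esub>"
proof -
  have "group_hom G1 G0 d" unfolding group_hom_def group_hom_axioms_def using grp1 grp0 d_hom by blast
  thus ?thesis by (rule group_hom.hom_one)
qed
lemma act_closed[simp]: "x \<in> carrier G0 \<Longrightarrow> a \<in> carrier G1 \<Longrightarrow> act x a \<in> carrier G1"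
  using cm unfolding crossed_module_def by blast
lemma act_mult: "x \<in> carrier G0 \<Longrightarrow> a \<in> carrier G1 \<Longrightarrow> b \<in> carrier G1 \<Longrightarrow>
   act x (a \<otimes>\<^bsub>G1\<^esub> b) = act x a \<otimes>\<^bsub>G1\<^esub> act x b"
  using cm unfolding crossed_module_def by blast
lemma act_one[simp]: "a \<in> carrier G1 \<Longrightarrow> act \<one>\<^bsub>G0\<^esub> a = a"
  using cm unfolding crossed_module_def by blast
lemma act_comp: "x \<in> carrier G0 \<Longrightarrow> y \<in> carrier G0 \<Longrightarrow> a \<in> carrier G1 \<Longrightarrow>
   act (x \<otimes>\<^bsub>G0\<^esub> y) a = act x (act y a)"
  using cm unfolding crossed_module_def by blast
lemma d_act: "x \<in> carrier G0 \<Longrightarrow> a \<in> carrier G1 \<Longrightarrow>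
   d (act x a) = x \<otimes>\<^bsub>G0\<^esub> d a \<otimes>\<^bsub>G0\<^esub> inv\<^bsub>G0\<^esub> x"
  using cm unfolding crossed_module_def by blast
lemma act_d: "a \<in> carrier G1 \<Longrightarrow> b \<in> carrier G1 \<Longrightarrow>
   act (d b) a = b \<otimes>\<^bsub>G1\<^esub> a \<otimes>\<^bsub>G1\<^esub> inv\<^bsub>G1\<^esub> b"
  using cm unfolding crossed_module_def by blast

lemma act_x_one[simp]: "x \<in> carrier G0 \<Longrightarrow> act x \<one>\<^bsub>G1\<^esub> = \<one>\<^bsub>G1\<^esub>"
proof -
  assume x: "x \<in> carrier G0"
  have "act x \<one>\<^bsub>G1\<^esub> \<otimes>\<^bsub>G1\<^esub> act x \<one>\<^bsub>G1\<^esub> = act x \<one>\<^bsub>G1\<^esub>"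
    using act_mult[OF x, of "\<one>\<^bsub>G1\<^esub>" "\<one>\<^bsub>G1\<^esub>"] by simp
  thus ?thesis using x by simp
qed

lemma g1_cancel[simp]:
  "a \<in> carrier G1 \<Longrightarrow> b \<in> carrier G1 \<Longrightarrow> inv\<^bsub>G1\<^esub> a \<otimes>\<^bsub>G1\<^esub> (a \<otimes>\<^bsub>G1\<^esub> b) = b"
  "a \<in> carrier G1 \<Longrightarrow> b \<in> carrier G1 \<Longrightarrow> a \<otimes>\<^bsub>G1\<^esub> (inv\<^bsub>G1\<^esub> a \<otimes>\<^bsub>G1\<^esub> b) = b"
  by (simp_all add: g1.m_assoc[symmetric])
lemma g0_cancel[simp]:
  "a \<in> carrier G0 \<Longrightarrow> b \<in> carrier G0 \<Longrightarrow> inv\<^bsub>G0\<^esub> a \<otimes>\<^bsub>G0\<^esub> (a \<otimes>\<^bsub>G0\<^esub> b) = b"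
  "a \<in> carrier G0 \<Longrightarrow> b \<in> carrier G0 \<Longrightarrow> a \<otimes>\<^bsub>G0\<^esub> (inv\<^bsub>G0\<^esub> a \<otimes>\<^bsub>G0\<^esub> b) = b"
  by (simp_all add: g0.m_assoc[symmetric])

abbreviation "Cat \<equiv> CatXM G1 G0 d act"
abbreviation "ZZ \<equiv> Z0 G1 G0 d act"

lemma Cat_simps[simp]:
  "ob Cat = carrier G0"
  "cmp Cat g f = (fst f, fst (snd g) \<otimes>\<^bsub>G1\<^esub> fst (snd f), snd (snd g))"
  "idm Cat x = (x, \<one>\<^bsub>G1\<^esub>, x)"
  "tob Cat x y = x \<otimes>\<^bsub>G0\<^esub> y"
  "tmor Cat f g = (fst f \<otimes>\<^bsub>G0\<^esub> fst g, fst (snd f) \<otimes>\<^bsub>G1\<^esub> act (fst f) (fst (snd g)),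
                    snd (snd f) \<otimes>\<^bsub>G0\<^esub> snd (snd g))"
  "unt Cat = \<one>\<^bsub>G0\<^esub>"
  by (simp_all add: CatXM_def)

lemma hom_Cat: "f \<in> hom Cat x y \<longleftrightarrow> (\<exists>a. f = (x,a,y) \<and> x \<in> carrier G0 \<and> a \<in> carrier G1 \<and> y = d a \<otimes>\<^bsub>G0\<^esub> x)"
  by (auto simp: CatXM_def)

lemma hom_Cat_trip[simp]: "(x',a,y') \<in> hom Cat x y \<longleftrightarrow> x' = x \<and> y' = y \<and> x \<in> carrier G0 \<and> a \<in> carrier G1 \<and> y = d a \<otimes>\<^bsub>G0\<^esub> x"
  by (auto simp: CatXM_def)

lemma Z0_iff: "(x, xi) \<in> ZZ \<longleftrightarrow> x \<in> carrier G0 \<and> xi \<in> carrier G0 \<rightarrow>\<^sub>E carrier G1 \<and>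
     (\<forall>t\<in>carrier G0. d (xi t) = x \<otimes>\<^bsub>G0\<^esub> t \<otimes>\<^bsub>G0\<^esub> inv\<^bsub>G0\<^esub> x \<otimes>\<^bsub>G0\<^esub> inv\<^bsub>G0\<^esub> t) \<and>
     (\<forall>a\<in>carrier G1. xi (d a) = act x a \<otimes>\<^bsub>G1\<^esub> inv\<^bsub>G1\<^esub> a) \<and>
     (\<forall>s\<in>carrier G0. \<forall>t\<in>carrier G0. xi (s \<otimes>\<^bsub>G0\<^esub> t) = xi s \<otimes>\<^bsub>G1\<^esub> act s (xi t))"
  by (simp add: Z0_def)

lemma xibar_app[simp]: "y \<in> carrier G0 \<Longrightarrow> xibar G0 x xi y = (y \<otimes>\<^bsub>G0\<^esub> x, xi y, x \<otimes>\<^bsub>G0\<^esub> y)"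
  by (simp add: xibar_def)

lemma part1:
  assumes "(x, xi) \<in> ZZ" "y \<in> carrier G0"
  shows "(y \<otimes>\<^bsub>G0\<^esub> x, xi y, x \<otimes>\<^bsub>G0\<^esub> y) \<in> hom Cat (y \<otimes>\<^bsub>G0\<^esub> x) (x \<otimes>\<^bsub>G0\<^esub> y)"
proof -
  from assms have x: "x \<in> carrier G0" and xy: "xi y \<in> carrier G1"
    and dx: "d (xi y) = x \<otimes>\<^bsub>G0\<^esub> y \<otimes>\<^bsub>G0\<^esub> inv\<^bsub>G0\<^esub> x \<otimes>\<^bsub>G0\<^esub> inv\<^bsub>G0\<^esub> y"
    by (auto simp: Z0_iff)
  show ?thesis using x xy assms(2) by (simp add: dx g0.m_assoc)
qed

lemma part2:
  assumes "(x, xi) \<in> ZZ"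
  shows "nat_iso_lr Cat x (xibar G0 x xi)"
  unfolding nat_iso_lr_def
proof (intro conjI ballI)
  from assms have x: "x \<in> carrier G0" and xi: "\<And>y. y \<in> carrier G0 \<Longrightarrow> xi y \<in> carrier G1"
    and Z2: "\<And>a. a\<in>carrier G1 \<Longrightarrow> xi (d a) = act x a \<otimes>\<^bsub>G1\<^esub> inv\<^bsub>G1\<^esub> a"
    and Z3: "\<And>s t. s\<in>carrier G0 \<Longrightarrow> t\<in>carrier G0 \<Longrightarrow> xi (s \<otimes>\<^bsub>G0\<^esub> t) = xi s \<otimes>\<^bsub>G1\<^esub> act s (xi t)"
    by (auto simp: Z0_iff)
  fix y assume y: "y \<in> ob Cat"
  hence y: "y \<in> carrier G0" by simp
  have h: "x \<otimes>\<^bsub>G0\<^esub> y = d (xi y) \<otimes>\<^bsub>G0\<^esub> (y \<otimes>\<^bsub>G0\<^esub> x)" using part1[OF assms y] by simp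
  have h': "y \<otimes>\<^bsub>G0\<^esub> x = d (inv\<^bsub>G1\<^esub> xi y) \<otimes>\<^bsub>G0\<^esub> (x \<otimes>\<^bsub>G0\<^esub> y)"
    using h x y xi[OF y] by (simp add: g0.m_assoc[symmetric])
  show "is_iso Cat (xibar G0 x xi y) (tob Cat y x) (tob Cat x y)"
    unfolding is_iso_def
    apply (rule conjI)
    using part1[OF assms y] y apply simp
    apply (rule bexI[of _ "(x \<otimes>\<^bsub>G0\<^esub> y, inv\<^bsub>G1\<^esub> xi y, y \<otimes>\<^bsub>G0\<^esub> x)"])
    using x y xi[OF y] h' apply simp_all
    done
next
  from assms have x: "x \<in> carrier G0" and xi: "\<And>y. y \<in> carrier G0 \<Longrightarrow> xi y \<in> carrier G1"
    and Z2: "\<And>a. a\<in>carrier G1 \<Longrightarrow> xi (d a) = act x a \<otimes>\<^bsub>G1\<^esub> inv\<^bsub>G1\<^esub> a"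
    and Z3: "\<And>s t. s\<in>carrier G0 \<Longrightarrow> t\<in>carrier G0 \<Longrightarrow> xi (s \<otimes>\<^bsub>G0\<^esub> t) = xi s \<otimes>\<^bsub>G1\<^esub> act s (xi t)"
    by (auto simp: Z0_iff)
  fix y y' f assume y: "y \<in> ob Cat" and y': "y' \<in> ob Cat" and f: "f \<in> hom Cat y y'"
  then obtain a where fa: "f = (y,a,y')" and a: "a \<in> carrier G1" and yy: "y' = d a \<otimes>\<^bsub>G0\<^esub> y"
    by (auto simp: hom_Cat)
  have y0: "y \<in> carrier G0" using y by simp
  have key: "act x a \<otimes>\<^bsub>G1\<^esub> xi y = xi y' \<otimes>\<^bsub>G1\<^esub> a"
    using x a y0 xi[OF y0] by (simp add: yy Z3 Z2 act_d g1.m_assoc)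
  show "cmp Cat (tmor Cat (idm Cat x) f) (xibar G0 x xi y) = cmp Cat (xibar G0 x xi y') (tmor Cat f (idm Cat x))"
    using x y0 y' a xi[OF y0] key by (simp add: fa)
qed


lemma Z0D:
  assumes "(x, xi) \<in> ZZ"
  shows "x \<in> carrier G0" "\<And>y. y \<in> carrier G0 \<Longrightarrow> xi y \<in> carrier G1" "xi \<in> extensional (carrier G0)"
    "\<And>a. a\<in>carrier G1 \<Longrightarrow> xi (d a) = act x a \<otimes>\<^bsub>G1\<^esub> inv\<^bsub>G1\<^esub> a"
    "\<And>s t. s\<in>carrier G0 \<Longrightarrow> t\<in>carrier G0 \<Longrightarrow> xi (s \<otimes>\<^bsub>G0\<^esub> t) = xi s \<otimes>\<^bsub>G1\<^esub> act s (xi t)"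
  using assms by (auto simp: Z0_iff PiE_def)

lemma part3:
  assumes "(x, xi) \<in> ZZ"
  shows "ctr_obj Cat (x, xibar G0 x xi)"
proof -
  note Z = Z0D[OF assms]
  have hex: "\<forall>y\<in>ob Cat. \<forall>z\<in>ob Cat. xibar G0 x xi (tob Cat y z) =
      cmp Cat (tmor Cat (xibar G0 x xi y) (idm Cat z)) (tmor Cat (idm Cat y) (xibar G0 x xi z))"
    using Z by (auto simp: g0.m_assoc)
  show ?thesis unfolding ctr_obj_def using hex part2[OF assms] Z(1)
    by (simp add: xibar_def)
qed

lemma part4:
  assumes "ctr_obj Cat (x, ze)"
  shows "\<exists>X\<in>ZZ. ZtoC G0 X = (x, ze)"
proof -
  from assms have x: "x \<in> carrier G0" and ext: "ze \<in> extensional (carrier G0)"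
    and ni: "nat_iso_lr Cat x ze"
    and hex: "\<And>y z. y\<in>carrier G0 \<Longrightarrow> z\<in>carrier G0 \<Longrightarrow>
        ze (y \<otimes>\<^bsub>G0\<^esub> z) = cmp Cat (tmor Cat (ze y) (idm Cat z)) (tmor Cat (idm Cat y) (ze z))"
    by (auto simp: ctr_obj_def)
  define xi where "xi = (\<lambda>y\<in>carrier G0. fst (snd (ze y)))"
  have zeq: "ze y = (y \<otimes>\<^bsub>G0\<^esub> x, xi y, x \<otimes>\<^bsub>G0\<^esub> y) \<and> xi y \<in> carrier G1 \<and>
      x \<otimes>\<^bsub>G0\<^esub> y = d (xi y) \<otimes>\<^bsub>G0\<^esub> (y \<otimes>\<^bsub>G0\<^esub> x)" if y: "y \<in> carrier G0" for y
  proof -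
    have "ze y \<in> hom Cat (y \<otimes>\<^bsub>G0\<^esub> x) (x \<otimes>\<^bsub>G0\<^esub> y)"
      using ni y unfolding nat_iso_lr_def is_iso_def by auto
    then show ?thesis using y by (auto simp: hom_Cat xi_def)
  qed
  have xiC: "\<And>y. y \<in> carrier G0 \<Longrightarrow> xi y \<in> carrier G1" using zeq by blast
  have Z1: "d (xi t) = x \<otimes>\<^bsub>G0\<^esub> t \<otimes>\<^bsub>G0\<^esub> inv\<^bsub>G0\<^esub> x \<otimes>\<^bsub>G0\<^esub> inv\<^bsub>G0\<^esub> t"
    if t: "t \<in> carrier G0" for t
  proof -
    have e: "x \<otimes>\<^bsub>G0\<^esub> t = d (xi t) \<otimes>\<^bsub>G0\<^esub> (t \<otimes>\<^bsub>G0\<^esub> x)" using zeq[OF t] by blast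
    have "d (xi t) = (x \<otimes>\<^bsub>G0\<^esub> t) \<otimes>\<^bsub>G0\<^esub> inv\<^bsub>G0\<^esub> (t \<otimes>\<^bsub>G0\<^esub> x)"
      using g0.inv_solve_right[of "d (xi t)" "x \<otimes>\<^bsub>G0\<^esub> t" "t \<otimes>\<^bsub>G0\<^esub> x"] e x t xiC[OF t] by simp
    thus ?thesis using x t by (simp add: g0.inv_mult_group g0.m_assoc)
  qed
  have Z3: "xi (s \<otimes>\<^bsub>G0\<^esub> t) = xi s \<otimes>\<^bsub>G1\<^esub> act s (xi t)"
    if s: "s \<in> carrier G0" and t: "t \<in> carrier G0" for s t
  proof -
    have "ze (s \<otimes>\<^bsub>G0\<^esub> t) = cmp Cat (tmor Cat (ze s) (idm Cat t)) (tmor Cat (idm Cat s) (ze t))"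
      using hex s t by blast
    hence "fst (snd (ze (s \<otimes>\<^bsub>G0\<^esub> t))) = fst (snd (cmp Cat (tmor Cat (ze s) (idm Cat t)) (tmor Cat (idm Cat s) (ze t))))"
      by simp
    thus ?thesis using zeq[OF s] zeq[OF t] zeq[of "s \<otimes>\<^bsub>G0\<^esub> t"] s t x by simp
  qed
  have xi1: "xi \<one>\<^bsub>G0\<^esub> = \<one>\<^bsub>G1\<^esub>"
  proof -
    have "xi \<one>\<^bsub>G0\<^esub> = xi \<one>\<^bsub>G0\<^esub> \<otimes>\<^bsub>G1\<^esub> xi \<one>\<^bsub>G0\<^esub>"
      using Z3[of "\<one>\<^bsub>G0\<^esub>" "\<one>\<^bsub>G0\<^esub>"] xiC[of "\<one>\<^bsub>G0\<^esub>"] by simp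
    thus ?thesis using xiC[of "\<one>\<^bsub>G0\<^esub>"] by simp
  qed
  have Z2: "xi (d a) = act x a \<otimes>\<^bsub>G1\<^esub> inv\<^bsub>G1\<^esub> a" if a: "a \<in> carrier G1" for a
  proof -
    have f: "(\<one>\<^bsub>G0\<^esub>, a, d a \<otimes>\<^bsub>G0\<^esub> \<one>\<^bsub>G0\<^esub>) \<in> hom Cat \<one>\<^bsub>G0\<^esub> (d a \<otimes>\<^bsub>G0\<^esub> \<one>\<^bsub>G0\<^esub>)"
      using a by simp
    have "cmp Cat (tmor Cat (idm Cat x) (\<one>\<^bsub>G0\<^esub>, a, d a \<otimes>\<^bsub>G0\<^esub> \<one>\<^bsub>G0\<^esub>)) (ze \<one>\<^bsub>G0\<^esub>) =
          cmp Cat (ze (d a \<otimes>\<^bsub>G0\<^esub> \<one>\<^bsub>G0\<^esub>)) (tmor Cat (\<one>\<^bsub>G0\<^esub>, a, d a \<otimes>\<^bsub>G0\<^esub> \<one>\<^bsub>G0\<^esub>) (idm Cat x))"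
    proof -
      have nat: "\<forall>y\<in>ob Cat. \<forall>y'\<in>ob Cat. \<forall>f\<in>hom Cat y y'.
        cmp Cat (tmor Cat (idm Cat x) f) (ze y) = cmp Cat (ze y') (tmor Cat f (idm Cat x))"
        using ni unfolding nat_iso_lr_def by blast
      show ?thesis by (rule nat[rule_format]) (use f a in simp_all)
    qed
    hence "act x a = xi (d a) \<otimes>\<^bsub>G1\<^esub> a"
      using zeq[of "\<one>\<^bsub>G0\<^esub>"] zeq[of "d a"] a x xi1 by simp
    thus ?thesis using g1.inv_solve_right[of "xi (d a)" "act x a" a] a x xiC[of "d a"] by simp
  qed
  have inZ: "(x, xi) \<in> ZZ"
    unfolding Z0_iff using x xiC Z1 Z2 Z3 by (auto simp: xi_def)
  have "xibar G0 x xi = ze"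
  proof
    fix y show "xibar G0 x xi y = ze y"
      using zeq[of y] ext by (cases "y \<in> carrier G0") (auto simp: xibar_def extensional_def)
  qed
  thus ?thesis using inZ by (auto simp: ZtoC_def intro!: bexI[of _ "(x, xi)"])
qed

lemma ob_centre: "ob (centre Cat) = {X. ctr_obj Cat X}" by (simp add: centre_def)

lemma part4b: "bij_betw (ZtoC G0) ZZ (ob (centre Cat))"
  unfolding bij_betw_def
proof
  show "inj_on (ZtoC G0) ZZ"
  proof (rule inj_onI)
    fix X Y assume X: "X \<in> ZZ" and Y: "Y \<in> ZZ" and e: "ZtoC G0 X = ZtoC G0 Y"
    obtain x xi where Xe: "X = (x, xi)" by (cases X)
    obtain y eta where Ye: "Y = (y, eta)" by (cases Y)
    have xy: "x = y" using e by (simp add: Xe Ye ZtoC_def)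
    have xe: "xibar G0 x xi = xibar G0 x eta" using e by (simp add: Xe Ye ZtoC_def xy)
    have "xi = eta"
    proof (rule extensionalityI)
      show "xi \<in> extensional (carrier G0)" using Z0D(3) X Xe by blast
      show "eta \<in> extensional (carrier G0)" using Z0D(3) Y Ye by blast
      fix t assume "t \<in> carrier G0"
      thus "xi t = eta t" using fun_cong[OF xe, of t] by simp
    qed
    thus "X = Y" using Xe Ye xy by simp
  qed
  show "ZtoC G0 ` ZZ = ob (centre Cat)"
  proof
    show "ZtoC G0 ` ZZ \<subseteq> ob (centre Cat)"
      using part3 by (auto simp: ob_centre ZtoC_def)
    show "ob (centre Cat) \<subseteq> ZtoC G0 ` ZZ"
      using part4 by (force simp: ob_centre)
  qed
qed


abbreviation "ZG \<equiv> Z0grp G1 G0 d act"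
abbreviation "dZ \<equiv> deltaZ G1 G0 d act"

lemma ZG_mult: "X \<otimes>\<^bsub>ZG\<^esub> Y = (fst X \<otimes>\<^bsub>G0\<^esub> fst Y,
                   \<lambda>t\<in>carrier G0. act (fst X) (snd Y t) \<otimes>\<^bsub>G1\<^esub> snd X t)"
  by (simp add: Z0grp_def)

lemma restrict_eq_iff: "f \<in> extensional A \<Longrightarrow> (f = restrict g A) \<longleftrightarrow> (\<forall>t\<in>A. f t = g t)"
  by (auto simp: extensional_def fun_eq_iff)

lemma centre_hom: "hom (centre Cat) X Y = ctr_hom Cat X Y" by (simp add: centre_def)

lemma part5:
  assumes X: "(x, xi) \<in> ZZ" and Y: "(y, eta) \<in> ZZ" and a: "a \<in> carrier G1"
    and y: "y = d a \<otimes>\<^bsub>G0\<^esub> x"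
  shows "(x, a, y) \<in> hom (centre Cat) (x, xibar G0 x xi) (y, xibar G0 y eta)
     \<longleftrightarrow> (y, eta) = dZ a \<otimes>\<^bsub>ZG\<^esub> (x, xi)"
proof -
  note ZX = Z0D[OF X] and ZY = Z0D[OF Y]
  have pt: "(a \<otimes>\<^bsub>G1\<^esub> xi t = eta t \<otimes>\<^bsub>G1\<^esub> act t a) \<longleftrightarrow>
      eta t = act (d a) (xi t) \<otimes>\<^bsub>G1\<^esub> (a \<otimes>\<^bsub>G1\<^esub> inv\<^bsub>G1\<^esub> act t a)" if t: "t \<in> carrier G0" for t
  proof -
    have "act (d a) (xi t) \<otimes>\<^bsub>G1\<^esub> (a \<otimes>\<^bsub>G1\<^esub> inv\<^bsub>G1\<^esub> act t a) = (a \<otimes>\<^bsub>G1\<^esub> xi t) \<otimes>\<^bsub>G1\<^esub> inv\<^bsub>G1\<^esub> act t a"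
      using a t ZX(2)[OF t] by (simp add: act_d g1.m_assoc)
    thus ?thesis using g1.inv_solve_right[of "eta t" "a \<otimes>\<^bsub>G1\<^esub> xi t" "act t a"] a t ZX(2)[OF t] ZY(2)[OF t]
      by auto
  qed
  have lhs: "(x, a, y) \<in> hom (centre Cat) (x, xibar G0 x xi) (y, xibar G0 y eta) \<longleftrightarrow>
      (\<forall>t\<in>carrier G0. a \<otimes>\<^bsub>G1\<^esub> xi t = eta t \<otimes>\<^bsub>G1\<^esub> act t a)"
    using a ZX(1) ZX(2) ZY(2) by (simp add: centre_hom ctr_hom_def y g0.m_assoc)
  have rhs: "(y, eta) = dZ a \<otimes>\<^bsub>ZG\<^esub> (x, xi) \<longleftrightarrow>
      (\<forall>t\<in>carrier G0. eta t = act (d a) (xi t) \<otimes>\<^bsub>G1\<^esub> (a \<otimes>\<^bsub>G1\<^esub> inv\<^bsub>G1\<^esub> act t a))"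
  proof -
    have "dZ a \<otimes>\<^bsub>ZG\<^esub> (x, xi) = (y, \<lambda>t\<in>carrier G0. act (d a) (xi t) \<otimes>\<^bsub>G1\<^esub> (a \<otimes>\<^bsub>G1\<^esub> inv\<^bsub>G1\<^esub> act t a))"
      by (simp add: ZG_mult deltaZ_def y cong: restrict_cong)
    thus ?thesis using restrict_eq_iff[OF ZY(3)] by simp
  qed
  show ?thesis using lhs rhs pt by auto
qed


abbreviation "CZ \<equiv> CatXM G1 ZG dZ (actZ act)"

lemma CZ_simps[simp]:
  "ob CZ = ZZ"
  "cmp CZ g f = (fst f, fst (snd g) \<otimes>\<^bsub>G1\<^esub> fst (snd f), snd (snd g))"
  "idm CZ X = (X, \<one>\<^bsub>G1\<^esub>, X)"
  "tob CZ X Y = X \<otimes>\<^bsub>ZG\<^esub> Y"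
  "tmor CZ f g = (fst f \<otimes>\<^bsub>ZG\<^esub> fst g, fst (snd f) \<otimes>\<^bsub>G1\<^esub> act (fst (fst f)) (fst (snd g)),
                    snd (snd f) \<otimes>\<^bsub>ZG\<^esub> snd (snd g))"
  "unt CZ = \<one>\<^bsub>ZG\<^esub>"
  by (simp_all add: CatXM_def Z0grp_def actZ_def)

lemma hom_CZ: "f \<in> hom CZ X Y \<longleftrightarrow> (\<exists>a. f = (X,a,Y) \<and> X \<in> ZZ \<and> a \<in> carrier G1 \<and> Y = dZ a \<otimes>\<^bsub>ZG\<^esub> X)"
  by (auto simp: CatXM_def Z0grp_def)

lemma centre_simps[simp]:
  "cmp (centre Cat) = cmp Cat"
  "idm (centre Cat) X = idm Cat (fst X)"
  "tmor (centre Cat) = tmor Cat"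
  by (simp_all add: centre_def)

lemma part6:
  "smcat_iso CZ (centre Cat) (ZtoC G0) (\<lambda>(X, a, Y). (fst X, a, fst Y))"
  unfolding smcat_iso_def
proof (intro conjI ballI)
  show "bij_betw (ZtoC G0) (ob CZ) (ob (centre Cat))" using part4b by simp
next
  fix X Y assume X: "X \<in> ob CZ" and Y: "Y \<in> ob CZ"
  obtain x xi where Xe: "X = (x, xi)" by (cases X)
  obtain y eta where Ye: "Y = (y, eta)" by (cases Y)
  have XZ: "(x,xi) \<in> ZZ" and YZ: "(y,eta) \<in> ZZ" using X Y Xe Ye by auto
  show "bij_betw (\<lambda>(X, a, Y). (fst X, a, fst Y)) (hom CZ X Y) (hom (centre Cat) (ZtoC G0 X) (ZtoC G0 Y))"
    unfolding bij_betw_def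
  proof
    show "inj_on (\<lambda>(X, a, Y). (fst X, a, fst Y)) (hom CZ X Y)"
    proof (rule inj_onI)
      fix f g assume "f \<in> hom CZ X Y" "g \<in> hom CZ X Y"
        and e: "(\<lambda>(X, a, Y). (fst X, a, fst Y)) f = (\<lambda>(X, a, Y). (fst X, a, fst Y)) g"
      then obtain a b where "f = (X,a,Y)" "g = (X,b,Y)" by (auto simp: hom_CZ)
      thus "f = g" using e by simp
    qed
    have fstd: "fst (dZ a \<otimes>\<^bsub>ZG\<^esub> X) = d a \<otimes>\<^bsub>G0\<^esub> x" for a
      by (simp add: ZG_mult deltaZ_def Xe)
    show "(\<lambda>(X, a, Y). (fst X, a, fst Y)) ` hom CZ X Y = hom (centre Cat) (ZtoC G0 X) (ZtoC G0 Y)"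
    proof
      show "(\<lambda>(X, a, Y). (fst X, a, fst Y)) ` hom CZ X Y \<subseteq> hom (centre Cat) (ZtoC G0 X) (ZtoC G0 Y)"
      proof
        fix f assume "f \<in> (\<lambda>(X, a, Y). (fst X, a, fst Y)) ` hom CZ X Y"
        then obtain a where a: "a \<in> carrier G1" and Yd: "Y = dZ a \<otimes>\<^bsub>ZG\<^esub> X"
          and fe: "f = (x, a, y)" by (auto simp: hom_CZ Xe Ye)
        have yy: "y = d a \<otimes>\<^bsub>G0\<^esub> x" using fstd[of a] Yd Ye by (metis fst_conv)
        show "f \<in> hom (centre Cat) (ZtoC G0 X) (ZtoC G0 Y)"
        proof -
          have "(y, eta) = dZ a \<otimes>\<^bsub>ZG\<^esub> (x, xi)" using Yd Xe Ye by simp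
          hence "(x, a, y) \<in> hom (centre Cat) (x, xibar G0 x xi) (y, xibar G0 y eta)"
            using part5[OF XZ YZ a yy] by blast
          thus ?thesis by (simp add: fe ZtoC_def Xe Ye)
        qed
      qed
      show "hom (centre Cat) (ZtoC G0 X) (ZtoC G0 Y) \<subseteq> (\<lambda>(X, a, Y). (fst X, a, fst Y)) ` hom CZ X Y"
      proof
        fix f assume f: "f \<in> hom (centre Cat) (ZtoC G0 X) (ZtoC G0 Y)"
        hence "f \<in> hom Cat x y" by (simp add: centre_hom ctr_hom_def ZtoC_def Xe Ye)
        then obtain a where fe: "f = (x,a,y)" and a: "a \<in> carrier G1" and yy: "y = d a \<otimes>\<^bsub>G0\<^esub> x"
          by (auto simp: hom_Cat)
        have "(x, a, y) \<in> hom (centre Cat) (x, xibar G0 x xi) (y, xibar G0 y eta)"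
          using f by (simp add: fe ZtoC_def Xe Ye)
        hence Yd: "Y = dZ a \<otimes>\<^bsub>ZG\<^esub> X"
          using part5[OF XZ YZ a yy] Xe Ye by simp
        have "(X, a, Y) \<in> hom CZ X Y" using X a Yd by (auto simp: hom_CZ)
        thus "f \<in> (\<lambda>(X, a, Y). (fst X, a, fst Y)) ` hom CZ X Y"
          by (auto simp: fe Xe Ye intro!: image_eqI[of _ _ "(X, a, Y)"])
      qed
    qed
  qed
next
  fix X assume "X \<in> ob CZ"
  show "(\<lambda>(X, a, Y). (fst X, a, fst Y)) (idm CZ X) = idm (centre Cat) (ZtoC G0 X)"
    by (simp add: ZtoC_def)
next
  fix X Y Z f g assume "f \<in> hom CZ X Y" "g \<in> hom CZ Y Z"
  then obtain a b where "f = (X,a,Y)" "g = (Y,b,Z)" by (auto simp: hom_CZ)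
  thus "(\<lambda>(X, a, Y). (fst X, a, fst Y)) (cmp CZ g f) =
       cmp (centre Cat) ((\<lambda>(X, a, Y). (fst X, a, fst Y)) g) ((\<lambda>(X, a, Y). (fst X, a, fst Y)) f)"
    by simp
next
  fix X Y assume X: "X \<in> ob CZ" and Y: "Y \<in> ob CZ"
  obtain x xi where Xe: "X = (x, xi)" by (cases X)
  obtain y eta where Ye: "Y = (y, eta)" by (cases Y)
  have XZ: "(x,xi) \<in> ZZ" and YZ: "(y,eta) \<in> ZZ" using X Y Xe Ye by auto
  note ZX = Z0D[OF XZ] and ZY = Z0D[OF YZ]
  show "ZtoC G0 (tob CZ X Y) = tob (centre Cat) (ZtoC G0 X) (ZtoC G0 Y)"
  proof -
    have "xibar G0 (x \<otimes>\<^bsub>G0\<^esub> y) (\<lambda>t\<in>carrier G0. act x (eta t) \<otimes>\<^bsub>G1\<^esub> xi t) =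
      (\<lambda>z\<in>carrier G0. cmp Cat (tmor Cat (idm Cat x) (xibar G0 y eta z)) (tmor Cat (xibar G0 x xi z) (idm Cat y)))"
    proof
      fix z show "xibar G0 (x \<otimes>\<^bsub>G0\<^esub> y) (\<lambda>t\<in>carrier G0. act x (eta t) \<otimes>\<^bsub>G1\<^esub> xi t) z =
        (\<lambda>z\<in>carrier G0. cmp Cat (tmor Cat (idm Cat x) (xibar G0 y eta z)) (tmor Cat (xibar G0 x xi z) (idm Cat y))) z"
        using ZX(1,2) ZY(1,2) by (cases "z \<in> carrier G0") (auto simp: xibar_def g0.m_assoc)
    qed
    thus ?thesis by (simp add: Xe Ye ZtoC_def centre_def ZG_mult)
  qed
next
  have "xibar G0 \<one>\<^bsub>G0\<^esub> (\<lambda>t\<in>carrier G0. \<one>\<^bsub>G1\<^esub>) = (\<lambda>z\<in>carrier G0. idm Cat z)"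
    by (auto simp: xibar_def fun_eq_iff)
  thus "ZtoC G0 (unt CZ) = unt (centre Cat)"
    by (simp add: ZtoC_def centre_def Z0grp_def CatXM_def)
next
  fix X X' Y Y' f g assume "f \<in> hom CZ X X'" "g \<in> hom CZ Y Y'"
  then obtain a b where "f = (X,a,X')" "g = (Y,b,Y')" by (auto simp: hom_CZ)
  thus "(\<lambda>(X, a, Y). (fst X, a, fst Y)) (tmor CZ f g) =
       tmor (centre Cat) ((\<lambda>(X, a, Y). (fst X, a, fst Y)) f) ((\<lambda>(X, a, Y). (fst X, a, fst Y)) g)"
    by (simp add: ZG_mult)
qed

end

theorem lemma3p7:
  fixes G1 :: "('a,'c) monoid_scheme" and G0 :: "('b,'e) monoid_scheme"
    and d :: "'a \<Rightarrow> 'b" and act :: "'b \<Rightarrow> 'a \<Rightarrow> 'a"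
  assumes "crossed_module G1 G0 d act"
  shows
    "(\<forall>(x, xi)\<in>Z0 G1 G0 d act. \<forall>y\<in>carrier G0.
        (y \<otimes>\<^bsub>G0\<^esub> x, xi y, x \<otimes>\<^bsub>G0\<^esub> y)
          \<in> hom (CatXM G1 G0 d act) (y \<otimes>\<^bsub>G0\<^esub> x) (x \<otimes>\<^bsub>G0\<^esub> y))
   \<and> (\<forall>(x, xi)\<in>Z0 G1 G0 d act. nat_iso_lr (CatXM G1 G0 d act) x (xibar G0 x xi))
   \<and> (\<forall>(x, xi)\<in>Z0 G1 G0 d act. ctr_obj (CatXM G1 G0 d act) (x, xibar G0 x xi))
   \<and> bij_betw (ZtoC G0) (Z0 G1 G0 d act) (ob (centre (CatXM G1 G0 d act)))
   \<and> (\<forall>(x, xi)\<in>Z0 G1 G0 d act. \<forall>(y, eta)\<in>Z0 G1 G0 d act. \<forall>a\<in>carrier G1.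
        y = d a \<otimes>\<^bsub>G0\<^esub> x \<longrightarrow>
        ((x, a, y) \<in> hom (centre (CatXM G1 G0 d act)) (x, xibar G0 x xi) (y, xibar G0 y eta)
          \<longleftrightarrow> (y, eta) = deltaZ G1 G0 d act a \<otimes>\<^bsub>Z0grp G1 G0 d act\<^esub> (x, xi)))
   \<and> smcat_iso (CatXM G1 (Z0grp G1 G0 d act) (deltaZ G1 G0 d act) (actZ act))
               (centre (CatXM G1 G0 d act))
               (ZtoC G0) (\<lambda>(X, a, Y). (fst X, a, fst Y))"
proof -
  interpret xm G1 G0 d act by (rule xm.intro) (rule assms)
  show ?thesis
  proof (intro conjI)
    show "\<forall>(x, xi)\<in>Z0 G1 G0 d act. \<forall>y\<in>carrier G0.
        (y \<otimes>\<^bsub>G0\<^esub> x, xi y, x \<otimes>\<^bsub>G0\<^esub> y)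
          \<in> hom (CatXM G1 G0 d act) (y \<otimes>\<^bsub>G0\<^esub> x) (x \<otimes>\<^bsub>G0\<^esub> y)"
      using part1 by blast
    show "\<forall>(x, xi)\<in>Z0 G1 G0 d act. nat_iso_lr (CatXM G1 G0 d act) x (xibar G0 x xi)"
      using part2 by blast
    show "\<forall>(x, xi)\<in>Z0 G1 G0 d act. ctr_obj (CatXM G1 G0 d act) (x, xibar G0 x xi)"
      using part3 by blast
    show "bij_betw (ZtoC G0) (Z0 G1 G0 d act) (ob (centre (CatXM G1 G0 d act)))"
      by (rule part4b)
    show "\<forall>(x, xi)\<in>Z0 G1 G0 d act. \<forall>(y, eta)\<in>Z0 G1 G0 d act. \<forall>a\<in>carrier G1.
        y = d a \<otimes>\<^bsub>G0\<^esub> x \<longrightarrow>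
        ((x, a, y) \<in> hom (centre (CatXM G1 G0 d act)) (x, xibar G0 x xi) (y, xibar G0 y eta)
          \<longleftrightarrow> (y, eta) = deltaZ G1 G0 d act a \<otimes>\<^bsub>Z0grp G1 G0 d act\<^esub> (x, xi))"
      using part5 by blast
    show "smcat_iso (CatXM G1 (Z0grp G1 G0 d act) (deltaZ G1 G0 d act) (actZ act))
               (centre (CatXM G1 G0 d act))
               (ZtoC G0) (\<lambda>(X, a, Y). (fst X, a, fst Y))"
      by (rule part6)
  qed
qed

end
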